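(* For every $n\ge1$, the polynomial $T_{2n}(x)+T_{2n}(y)\in\mathbb{C}[x,y]$ is a product of exactly $n$ irreducible factors (each of which is not a constant).
   Context: $T_k$ denotes the Chebycheff polynomial of degree $k$, defined by $T_k(\cos\theta)=\cos(k\theta)$. *)

theory Defs
  imports Complex_Main "HOL-Computational_Algebra.Computational_Algebra"
begin

definition cheb :: "nat \<Rightarrow> complex poly" where
  "cheb k = (THE p. \<forall>t::real. poly p (complex_of_real (cos t)) = complex_of_real (cos (real k * t)))"

text \<open>Bivariate polynomials C[x,y] are represented as C[x][y] = complex poly poly
  (outer variable y, coefficients in C[x]).\<close>
definition polyX :: "complex poly \<Rightarrow> complex poly poly" where
  "polyX p = [:p:]"

definition polyY :: "complex poly \<Rightarrow> complex poly poly" where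
  "polyY p = map_poly (\<lambda>c. [:c:]) p"

end

theory Submission
  imports Defs "HOL-Computational_Algebra.Field_as_Ring"
begin

lemma count_irr:
  fixes fs :: "'a::factorial_semiring list"
  assumes "\<forall>f\<in>set fs. irreducible f"
  shows "size (prime_factorization (prod_list fs)) = length fs \<and> prod_list fs \<noteq> 0"
  using assms
proof (induction fs)
  case Nil then show ?case by simp
next
  case (Cons f fs)
  have f: "irreducible f" using Cons by simp
  then have f0: "f \<noteq> 0" by auto
  have "prime (normalize f)" using f by (simp add: prime_elem_iff_irreducible[symmetric])
  then have "prime_factorization (normalize f) = {#normalize f#}" by (rule prime_factorization_prime)
  then have pf: "prime_factorization f = {#normalize f#}" by simp
  from Cons have IH: "size (prime_factorization (prod_list fs)) = length fs" "prod_list fs \<noteq> 0" by auto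
  show ?case using prime_factorization_mult[OF f0 IH(2)] pf IH f0 by simp
qed

fun ch :: "nat \<Rightarrow> complex poly" where
  "ch 0 = 1"
| "ch (Suc 0) = [:0,1:]"
| "ch (Suc (Suc n)) = [:0,2:] * ch (Suc n) - ch n"

lemma ch_cos: "poly (ch k) (complex_of_real (cos t)) = complex_of_real (cos (real k * t))"
proof (induction k rule: ch.induct)
  case 1 then show ?case by simp
next
  case 2 then show ?case by simp
next
  case (3 n)
  have "cos (real (Suc (Suc n)) * t) = 2 * cos t * cos (real (Suc n) * t) - cos (real n * t)"
  proof -
    have a: "real (Suc (Suc n)) * t = real (Suc n) * t + t" by (simp add: algebra_simps)
    have b: "real n * t = real (Suc n) * t - t" by (simp add: algebra_simps)
    show ?thesis unfolding a b cos_add cos_diff by simp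
  qed
  then show ?case using 3 by (simp add: of_real_mult of_real_diff)
qed

lemma zero_on_cos:
  fixes q :: "complex poly"
  assumes "\<And>t. poly q (complex_of_real (cos t)) = 0"
  shows "q = 0"
proof (rule ccontr)
  assume "q \<noteq> 0"
  then have fin: "finite {x. poly q x = 0}" by (rule poly_roots_finite)
  have "(\<lambda>t. complex_of_real (cos t)) ` {0..pi} \<subseteq> {x. poly q x = 0}" using assms by auto
  then have "finite ((\<lambda>t. complex_of_real (cos t)) ` {0..pi})" using fin finite_subset by blast
  moreover have "inj_on (\<lambda>t. complex_of_real (cos t)) {0..pi}"
    by (auto simp: inj_on_def intro: cos_inj_pi)
  ultimately have "finite {0..pi}" using finite_image_iff by blast
  then show False using infinite_Icc[of 0 pi] pi_gt_zero by simp
qed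

lemma cheb_eq: "cheb k = ch k"
  unfolding cheb_def
proof (rule the_equality)
  show "\<forall>t. poly (ch k) (complex_of_real (cos t)) = complex_of_real (cos (real k * t))"
    using ch_cos by simp
next
  fix p assume "\<forall>t. poly p (complex_of_real (cos t)) = complex_of_real (cos (real k * t))"
  then have "p - ch k = 0" by (intro zero_on_cos) (simp add: ch_cos)
  then show "p = ch k" by simp
qed

lemma ch_deg: "degree (ch m) = m \<and> coeff (ch m) m = (if m = 0 then 1 else 2^(m-1))"
proof (induction m rule: ch.induct)
  case 1 then show ?case by simp
next
  case 2 then show ?case by simp
next
  case (3 n)
  have h1: "degree (ch (Suc n)) = Suc n" "coeff (ch (Suc n)) (Suc n) = 2^n" using 3 by auto
  have h0: "degree (ch n) = n" using 3 by auto
  have nz: "ch (Suc n) \<noteq> 0" using h1 by auto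
  have d1: "degree ([:0,2:] * ch (Suc n)) = Suc (Suc n)"
    using h1 nz by (subst degree_mult_eq) auto
  have c1: "coeff ([:0,2:] * ch (Suc n)) (Suc (Suc n)) = 2 * 2^n"
    using h1 by simp
  have lt: "degree (ch n) < degree ([:0,2:] * ch (Suc n))" using d1 h0 by simp
  have "degree ([:0,2:] * ch (Suc n) - ch n) = Suc (Suc n)"
    using degree_add_eq_left[of "-ch n" "[:0,2:] * ch (Suc n)"] lt d1 by simp
  moreover have "coeff (ch n) (Suc (Suc n)) = 0" using h0 by (simp add: coeff_eq_0)
  ultimately show ?case using c1 by simp
qed

lemma poly_eq_by_roots:
  fixes p q :: "complex poly"
  assumes dp: "degree p = d" and dq: "degree q = d" and lc: "lead_coeff p = lead_coeff q"
    and fS: "finite S" and cS: "card S = d"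
    and rp: "\<And>x. x \<in> S \<Longrightarrow> poly p x = 0" and rq: "\<And>x. x \<in> S \<Longrightarrow> poly q x = 0"
  shows "p = q"
proof (rule ccontr)
  assume ne: "p \<noteq> q"
  show False
  proof (cases "d = 0")
    case True
    then have "p = [:coeff p 0:]" "q = [:coeff q 0:]" using dp dq by (auto elim: degree_eq_zeroE)
    then show False using ne lc dp dq True by (metis)
  next
    case False
    have "degree (p - q) \<le> d - 1"
    proof (rule degree_le, intro allI impI)
      fix i assume i: "d - 1 < i"
      show "coeff (p - q) i = 0"
      proof (cases "i = d")
        case True then show ?thesis using lc dp dq by simp
      next
        case False then have "i > d" using i by simp
        then show ?thesis using dp dq by (simp add: coeff_eq_0)
      qed
    qed
    moreover have "card {x. poly (p - q) x = 0} \<le> degree (p - q)"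
      using ne by (intro card_poly_roots_bound) simp
    moreover have "S \<subseteq> {x. poly (p - q) x = 0}" using rp rq by auto
    moreover have "finite {x. poly (p - q) x = 0}" using ne by (intro poly_roots_finite) simp
    ultimately have "card S \<le> d - 1" using card_mono by (metis order_trans)
    then show False using cS False by simp
  qed
qed

lemma irr_Q:
  fixes c s :: complex
  assumes s0: "s \<noteq> 0" and cs: "c^2 + s^2 = 1"
  shows "irreducible [: [:-(s^2), 0, 1:], [:0, -2*c:], 1 :]" (is "irreducible ?Q")
proof (rule irreducibleI)
  show "?Q \<noteq> 0" by simp
  show "\<not> is_unit ?Q"
  proof
    assume "is_unit ?Q"
    then obtain k where "?Q = [:k:]" using is_unit_poly_iff by blast
    then have "degree ?Q = 0" by simp
    then show False by simp
  qed
  fix a b assume ab: "?Q = a * b"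
  have a0: "a \<noteq> 0" and b0: "b \<noteq> 0" using ab by auto
  have "degree ?Q = 2" by simp
  then have deg: "degree a + degree b = 2" using ab degree_mult_eq[OF a0 b0] by metis
  have "lead_coeff ?Q = 1" by simp
  then have lab: "lead_coeff a * lead_coeff b = 1" using ab lead_coeff_mult[of a b] by metis
  show "is_unit a \<or> is_unit b"
  proof (cases "degree a = 0")
    case True
    then have "a = [:lead_coeff a:]" by (auto elim: degree_eq_zeroE)
    moreover have "lead_coeff a dvd 1" using lab by (metis dvdI)
    ultimately have "is_unit a" by (metis is_unit_const_poly_iff)
    then show ?thesis by simp
  next
    case Fa: False
    show ?thesis
    proof (cases "degree b = 0")
      case True
      then have "b = [:lead_coeff b:]" by (auto elim: degree_eq_zeroE)
      moreover have "lead_coeff b dvd 1" using lab by (metis dvdI mult.commute)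
      ultimately have "is_unit b" by (metis is_unit_const_poly_iff)
      then show ?thesis by simp
    next
      case False
      with Fa deg have da: "degree a = 1" by simp
      define a0' where "a0' = coeff a 0"
      define a1 where "a1 = coeff a 1"
      have aform: "a = [:a0', a1:]"
      proof (rule poly_eqI)
        fix i show "coeff a i = coeff [:a0', a1:] i"
          using da by (cases i) (auto simp: a0'_def a1_def coeff_eq_0 coeff_pCons split: nat.splits)
      qed
      have a1w: "a1 * lead_coeff b = 1" using lab da by (simp add: a1_def)
      define r where "r = - a0' * lead_coeff b"
      have "poly a r = 0" using a1w unfolding aform r_def by (simp add: algebra_simps)
      then have "poly ?Q r = 0" using ab by simp
      then have eq: "[:-(s^2), 0, 1:] + r * ([:0, -2*c:] + r) = 0" by simp
      define g where "g = r - [:0, c:]"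
      have gg: "g * g = [:s^2, 0, -(s^2):]"
      proof (rule poly_eq_poly_eq_iff[THEN iffD1], rule ext)
        fix t
        have "poly ([:-(s^2), 0, 1:] + r * ([:0, -2*c:] + r)) t = 0" using eq by simp
        then have h1: "-(s^2) + t^2 + poly r t * (-2*c*t + poly r t) = 0"
          by (simp add: algebra_simps power2_eq_square)
        define R where "R = poly r t"
        have h1': "-(s^2) + t^2 - 2*c*t*R + R*R = 0" using h1 unfolding R_def
          by (simp add: algebra_simps)
        have "R * R = R * R - (-(s^2) + t^2 - 2*c*t*R + R*R)" using h1' by simp
        then have h2: "R * R = s^2 - t^2 + 2*c*t*R" by (simp add: algebra_simps)
        have c2: "c^2 = 1 - s^2" using cs by (simp add: algebra_simps)
        have "poly (g * g) t = R * R - 2*c*t*R + c^2 * t^2"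
          unfolding g_def R_def by (simp add: algebra_simps power2_eq_square)
        also have "\<dots> = s^2 - t^2 + (1 - s^2) * t^2" unfolding h2 c2 by simp
        also have "\<dots> = poly [:s^2, 0, -(s^2):] t" by (simp add: algebra_simps power2_eq_square)
        finally show "poly (g * g) t = poly [:s^2, 0, -(s^2):] t" .
      qed
      have g0: "g \<noteq> 0" using gg s0 by auto
      have "degree (g * g) = 2" using gg s0 by simp
      then have dg: "degree g = 1" using degree_mult_eq[OF g0 g0] by simp
      have r1: "poly g 1 = 0" using arg_cong[OF gg, of "\<lambda>p. poly p 1"] by simp
      have r2: "poly g (-1) = 0" using arg_cong[OF gg, of "\<lambda>p. poly p (-1)"] by simp
      have "card {x. poly g x = 0} \<le> 1" using card_poly_roots_bound[OF g0] dg by simp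
      moreover have "{1, -1} \<subseteq> {x. poly g x = 0}" using r1 r2 by auto
      moreover have "finite {x. poly g x = 0}" using poly_roots_finite[OF g0] .
      ultimately have "card {1, -1::complex} \<le> 1" by (meson card_mono order_trans)
      then show ?thesis by simp
    qed
  qed
qed

definition ev :: "complex poly poly \<Rightarrow> complex \<Rightarrow> complex \<Rightarrow> complex" where
  "ev P x y = poly (poly P [:y:]) x"

lemma polyY_eval: "poly (polyY p) [:y:] = [:poly p y:]"
  unfolding polyY_def
proof (induction p)
  case 0 then show ?case by simp
next
  case (pCons a p)
  have "map_poly (\<lambda>c. [:c:]) (pCons a p) = pCons [:a:] (map_poly (\<lambda>c. [:c:]) p)"
    by (rule map_poly_pCons) simp
  then show ?case using pCons by simp
qed

lemma ev_P: "ev (polyX p + polyY p) x y = poly p x + poly p y"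
  unfolding ev_def by (simp add: polyY_eval polyX_def)

lemma zero_biv:
  assumes inf: "infinite B" and z: "\<And>x y. y \<in> B \<Longrightarrow> ev P x y = 0"
  shows "P = 0"
proof (rule ccontr)
  assume "P \<noteq> 0"
  then have fin: "finite {Y. poly P Y = 0}" by (rule poly_roots_finite)
  have "\<And>y. y \<in> B \<Longrightarrow> poly P [:y:] = 0"
  proof -
    fix y assume "y \<in> B"
    then have "poly (poly P [:y:]) = poly 0" using z unfolding ev_def by auto
    then show "poly P [:y:] = 0" using poly_eq_poly_eq_iff by blast
  qed
  then have "(\<lambda>y. [:y:]) ` B \<subseteq> {Y. poly P Y = 0}" by auto
  then have "finite ((\<lambda>y. [:y:]) ` B)" using fin finite_subset by blast
  moreover have "inj_on (\<lambda>y. [:y:]) B" by (auto simp: inj_on_def)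
  ultimately show False using inf finite_image_iff by blast
qed

lemma cos_shift_odd: "cos (x + real (2*k+1) * pi) = - cos x"
proof -
  have "cos (real (2*k+1) * pi) = -1" by (simp only: cos_npi) simp
  moreover have "sin (real (2*k+1) * pi) = 0" by (metis sin_npi)
  ultimately show ?thesis by (simp add: cos_add)
qed

definition hh :: "nat \<Rightarrow> real" where "hh n = pi / (2 * real n)"
definition th :: "nat \<Rightarrow> nat \<Rightarrow> real" where "th n k = real (2*k+1) * hh n"
definition UU :: "nat \<Rightarrow> real \<Rightarrow> nat \<Rightarrow> complex" where "UU n b k = complex_of_real (cos (b + th n k))"
definition VV :: "nat \<Rightarrow> real \<Rightarrow> nat \<Rightarrow> complex" where "VV n b k = complex_of_real (cos (th n k - b))"

lemma hh_pos: "n \<ge> 1 \<Longrightarrow> hh n > 0" unfolding hh_def by simp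
lemma hh_mult: "n \<ge> 1 \<Longrightarrow> 2 * real n * hh n = pi" unfolding hh_def by simp

lemma angles:
  assumes n: "n \<ge> 1" and b: "0 < b" "b < hh n / 2" and k: "k < n"
  shows "0 \<le> b + th n k" "b + th n k \<le> pi" "0 \<le> th n k - b" "th n k - b \<le> pi"
proof -
  have h: "hh n > 0" using hh_pos n by simp
  have "real (2*k+2) \<le> 2 * real n" using k by simp
  then have "real (2*k+2) * hh n \<le> 2 * real n * hh n" using h by (intro mult_right_mono) auto
  then have up: "real (2*k+2) * hh n \<le> pi" using hh_mult n by simp
  have t: "th n k = real (2*k+1) * hh n" by (simp add: th_def)
  have lo: "th n k \<ge> hh n" unfolding t using h by (simp add: algebra_simps)
  have e: "real (2*k+2) * hh n = th n k + hh n" unfolding t by (simp add: algebra_simps)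
  show "0 \<le> b + th n k" using lo h b by simp
  show "b + th n k \<le> pi" using up e b by simp
  show "0 \<le> th n k - b" using lo h b by simp
  show "th n k - b \<le> pi" using up e b h by simp
qed

lemma th_inj: "n \<ge> 1 \<Longrightarrow> th n j = th n k \<Longrightarrow> j = k"
  unfolding th_def using hh_pos[of n] by simp

lemma th_diff: assumes n: "n \<ge> 1" and b: "0 < b" "b < hh n / 2"
  shows "b + th n j \<noteq> th n k - b"
proof
  assume "b + th n j = th n k - b"
  then have e: "2 * b = (real k - real j) * (2 * hh n)" unfolding th_def by (simp add: algebra_simps)
  have h: "hh n > 0" using hh_pos n by simp
  show False
  proof (cases "k \<le> j")
    case True
    then have "(real k - real j) * (2 * hh n) \<le> 0" using h by (simp add: mult_nonpos_nonneg)
    then show False using e b by (simp add: mult.commute)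
  next
    case False
    then have "real k - real j \<ge> 1" by simp
    then have m: "(real k - real j) * (2 * hh n) \<ge> 1 * (2 * hh n)" using h by (intro mult_right_mono) auto
    show False using m e b h by linarith
  qed
qed

lemma roots_card:
  assumes n: "n \<ge> 1" and b: "0 < b" "b < hh n / 2"
  shows "card (UU n b ` {..<n} \<union> VV n b ` {..<n}) = 2 * n"
proof -
  have iU: "inj_on (UU n b) {..<n}"
  proof (rule inj_onI)
    fix j k assume j: "j \<in> {..<n}" and k: "k \<in> {..<n}" and e: "UU n b j = UU n b k"
    then have "cos (b + th n j) = cos (b + th n k)" unfolding UU_def by simp
    moreover have "j < n" "k < n" using j k by auto
    ultimately have "b + th n j = b + th n k" using angles[OF n b, of j] angles[OF n b, of k] cos_inj_pi by blast
    then show "j = k" using th_inj n by simp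
  qed
  have iV: "inj_on (VV n b) {..<n}"
  proof (rule inj_onI)
    fix j k assume j: "j \<in> {..<n}" and k: "k \<in> {..<n}" and e: "VV n b j = VV n b k"
    then have "cos (th n j - b) = cos (th n k - b)" unfolding VV_def by simp
    moreover have "j < n" "k < n" using j k by auto
    ultimately have "th n j - b = th n k - b" using angles[OF n b, of j] angles[OF n b, of k] cos_inj_pi by blast
    then show "j = k" using th_inj n by simp
  qed
  have disj: "UU n b ` {..<n} \<inter> VV n b ` {..<n} = {}"
  proof (rule ccontr)
    assume "UU n b ` {..<n} \<inter> VV n b ` {..<n} \<noteq> {}"
    then obtain j k where j: "j < n" and k: "k < n" and e: "UU n b j = VV n b k" by auto
    then have "cos (b + th n j) = cos (th n k - b)" unfolding UU_def VV_def by simp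
    then have "b + th n j = th n k - b" using angles[OF n b, of j] angles[OF n b, of k] j k cos_inj_pi by blast
    then show False using th_diff[OF n b] by blast
  qed
  show ?thesis
    using card_Un_disjoint[OF _ _ disj] card_image[OF iU] card_image[OF iV] by simp
qed

lemma ch_root_U:
  assumes n: "n \<ge> 1"
  shows "poly (ch (2*n)) (UU n b k) = - complex_of_real (cos (real (2*n) * b))"
proof -
  have "real (2*n) * (b + th n k) = real (2*n) * b + real (2*k+1) * (2 * real n * hh n)"
    unfolding th_def by (simp add: algebra_simps)
  also have "\<dots> = real (2*n) * b + real (2*k+1) * pi" using hh_mult[OF n] by simp
  finally have e: "real (2*n) * (b + th n k) = real (2*n) * b + real (2*k+1) * pi" .
  show ?thesis unfolding UU_def ch_cos e cos_shift_odd by simp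
qed

lemma ch_root_V:
  assumes n: "n \<ge> 1"
  shows "poly (ch (2*n)) (VV n b k) = - complex_of_real (cos (real (2*n) * b))"
proof -
  have "real (2*n) * (th n k - b) = - (real (2*n) * b) + real (2*k+1) * (2 * real n * hh n)"
    unfolding th_def by (simp add: algebra_simps)
  also have "\<dots> = - (real (2*n) * b) + real (2*k+1) * pi" using hh_mult[OF n] by simp
  finally have e: "real (2*n) * (th n k - b) = - (real (2*n) * b) + real (2*k+1) * pi" .
  show ?thesis unfolding VV_def ch_cos e cos_shift_odd cos_minus by simp
qed

lemma onevar:
  assumes n: "n \<ge> 1" and b: "0 < b" "b < hh n / 2"
  shows "ch (2*n) + [:complex_of_real (cos (real (2*n) * b)):]
       = smult (2^(2*n-1)) (\<Prod>k<n. [:-UU n b k, 1:] * [:-VV n b k, 1:])"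
    (is "?p = ?q")
proof (rule poly_eq_by_roots)
  have dch: "degree (ch (2*n)) = 2*n" "coeff (ch (2*n)) (2*n) = 2^(2*n-1)" using ch_deg[of "2*n"] n by auto
  have dc: "degree [:complex_of_real (cos (real (2*n) * b)):] < degree (ch (2*n))" using dch n by simp
  show dp: "degree ?p = 2*n" using degree_add_eq_left[OF dc] dch by simp
  show "lead_coeff ?p = lead_coeff ?q"
  proof -
    have "lead_coeff ?p = 2^(2*n-1)" using dp dch n by (simp add: coeff_pCons split: nat.splits)
    moreover have "lead_coeff ?q = 2^(2*n-1)" by (simp add: lead_coeff_prod lead_coeff_mult)
    ultimately show ?thesis by simp
  qed
  have nz: "\<forall>k\<in>{..<n}. [:-UU n b k, 1:] * [:-VV n b k, 1:] \<noteq> 0" by simp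
  have "degree (\<Prod>k<n. [:-UU n b k, 1:] * [:-VV n b k, 1:]) = (\<Sum>k<n. degree ([:-UU n b k, 1:] * [:-VV n b k, 1:]))"
    by (rule degree_prod_eq_sum_degree[OF nz])
  also have "\<dots> = (\<Sum>k<n. 2)" by (intro sum.cong refl) (simp add: degree_mult_eq)
  finally show "degree ?q = 2*n" by simp
  show "finite (UU n b ` {..<n} \<union> VV n b ` {..<n})" by simp
  show "card (UU n b ` {..<n} \<union> VV n b ` {..<n}) = 2*n" by (rule roots_card[OF n b])
  fix x assume x: "x \<in> UU n b ` {..<n} \<union> VV n b ` {..<n}"
  then show "poly ?p x = 0" using ch_root_U[OF n] ch_root_V[OF n] by auto
  from x obtain k where k: "k < n" and xk: "x = UU n b k \<or> x = VV n b k" by auto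
  have "poly ([:-UU n b k, 1:] * [:-VV n b k, 1:]) x = 0" using xk by auto
  then have "(\<Prod>j<n. poly ([:-UU n b j, 1:] * [:-VV n b j, 1:]) x) = 0"
    using k by (intro prod_zero) auto
  then show "poly ?q x = 0" by (simp add: poly_prod del: poly_mult)
qed

definition QQ :: "nat \<Rightarrow> nat \<Rightarrow> complex poly poly" where
  "QQ n k = [: [:-((complex_of_real (sin (th n k)))^2), 0, 1:], [:0, -2*complex_of_real (cos (th n k)):], 1 :]"

lemma Qfac: "ev (QQ n k) x (complex_of_real (cos b)) = (x - UU n b k) * (x - VV n b k)"
proof -
  define t where "t = th n k"
  have r1: "cos (b + t) + cos (t - b) = 2 * cos b * cos t" by (simp add: cos_add cos_diff)
  have r2: "cos (b + t) * cos (t - b) = (cos b)^2 - (sin t)^2"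
  proof -
    have "cos (b + t) * cos (t - b) = (cos b * cos t)^2 - (sin b * sin t)^2"
      by (simp add: cos_add cos_diff power2_eq_square algebra_simps)
    also have "\<dots> = (cos b)^2 * (1 - (sin t)^2) - (1 - (cos b)^2) * (sin t)^2"
      by (simp add: power_mult_distrib cos_squared_eq[of t] sin_squared_eq[of b])
    also have "\<dots> = (cos b)^2 - (sin t)^2" by (simp add: algebra_simps)
    finally show ?thesis .
  qed
  define U where "U = complex_of_real (cos (b + t))"
  define V where "V = complex_of_real (cos (t - b))"
  have c1: "U + V = 2 * complex_of_real (cos b) * complex_of_real (cos t)"
    unfolding U_def V_def using arg_cong[OF r1, of complex_of_real] by simp
  have c2: "U * V = (complex_of_real (cos b))^2 - (complex_of_real (sin t))^2"
    unfolding U_def V_def using arg_cong[OF r2, of complex_of_real] by simp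
  have evq: "ev (QQ n k) x y = x*x - (complex_of_real (sin t))^2 - 2 * complex_of_real (cos t) * x * y + y*y" for y
    unfolding ev_def QQ_def t_def by (simp add: algebra_simps)
  have "(x - U) * (x - V) = x * x - (U + V) * x + U * V" by (simp add: algebra_simps)
  also have "\<dots> = ev (QQ n k) x (complex_of_real (cos b))"
    unfolding c1 c2 evq by (simp add: algebra_simps power2_eq_square)
  finally show ?thesis unfolding U_def V_def UU_def VV_def t_def by simp
qed

lemma Q_irr: assumes n: "n \<ge> 1" and k: "k < n" shows "irreducible (QQ n k)"
proof -
  have h: "hh n > 0" using hh_pos[OF n] .
  have "real (2*k+2) \<le> 2 * real n" using k by simp
  then have "real (2*k+2) * hh n \<le> 2 * real n * hh n" using h by (intro mult_right_mono) auto
  then have up: "real (2*k+2) * hh n \<le> pi" using hh_mult n by simp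
  have e: "real (2*k+2) * hh n = th n k + hh n" unfolding th_def by (simp add: algebra_simps)
  have lo: "th n k \<ge> hh n" unfolding th_def using h by (simp add: algebra_simps)
  have "sin (th n k) > 0" using up e lo h by (intro sin_gt_zero) auto
  then have s0: "complex_of_real (sin (th n k)) \<noteq> 0" by simp
  have "(cos (th n k))^2 + (sin (th n k))^2 = 1" by (simp add: algebra_simps)
  then have "complex_of_real ((cos (th n k))^2 + (sin (th n k))^2) = 1" by simp
  then have "(complex_of_real (cos (th n k)))^2 + (complex_of_real (sin (th n k)))^2 = 1"
    by (simp only: of_real_add of_real_power)
  then show ?thesis unfolding QQ_def using irr_Q[OF s0] by simp
qed

lemma prod_list_upt: "prod_list (map f [0..<m]) = prod f {..<m}"
  by (induction m) (simp_all add: prod.lessThan_Suc)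

lemma biv_identity:
  assumes n: "n \<ge> 1"
  shows "polyX (cheb (2*n)) + polyY (cheb (2*n)) = [:[:2^(2*n-1):]:] * (\<Prod>k<n. QQ n k)"
proof -
  let ?P = "polyX (cheb (2*n)) + polyY (cheb (2*n))"
  let ?R = "[:[:2^(2*n-1):]:] * (\<Prod>k<n. QQ n k)"
  define B where "B = (\<lambda>b. complex_of_real (cos b)) ` {0<..<hh n / 2}"
  have h: "hh n > 0" using hh_pos[OF n] .
  have hpi: "hh n / 2 < pi"
  proof -
    have "2 \<le> 2 * real n" using n by simp
    then have "pi / (2 * real n) \<le> pi / 2" by (intro divide_left_mono) auto
    then have "hh n \<le> pi / 2" unfolding hh_def .
    moreover have "hh n / 2 < hh n" using h by simp
    ultimately show ?thesis using pi_gt_zero by linarith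
  qed
  have infB: "infinite B"
  proof
    assume "finite B"
    moreover have "inj_on (\<lambda>b. complex_of_real (cos b)) {0<..<hh n / 2}"
    proof (rule inj_onI)
      fix x y assume x: "x \<in> {0<..<hh n / 2}" and y: "y \<in> {0<..<hh n / 2}"
        and e: "complex_of_real (cos x) = complex_of_real (cos y)"
      have "cos x = cos y" using e by simp
      moreover have "0 \<le> x" "x \<le> pi" "0 \<le> y" "y \<le> pi" using x y hpi by auto
      ultimately show "x = y" using cos_inj_pi by blast
    qed
    ultimately have "finite {0<..<hh n / 2}" unfolding B_def using finite_image_iff by blast
    moreover have "0 < hh n / 2" using h by simp
    ultimately show False using infinite_Ioo_iff by blast
  qed
  have "?P - ?R = 0"
  proof (rule zero_biv[OF infB])
    fix x y assume "y \<in> B"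
    then obtain b where b: "0 < b" "b < hh n / 2" and y: "y = complex_of_real (cos b)"
      unfolding B_def by auto
    have "ev ?P x y = poly (ch (2*n)) x + complex_of_real (cos (real (2*n) * b))"
      unfolding ev_P cheb_eq y ch_cos by simp
    also have "\<dots> = poly (ch (2*n) + [:complex_of_real (cos (real (2*n) * b)):]) x" by simp
    also have "\<dots> = poly (smult (2^(2*n-1)) (\<Prod>k<n. [:-UU n b k, 1:] * [:-VV n b k, 1:])) x"
      unfolding onevar[OF n b] ..
    also have "\<dots> = 2^(2*n-1) * (\<Prod>k<n. (x - UU n b k) * (x - VV n b k))"
      by (simp add: poly_prod algebra_simps)
    also have "\<dots> = 2^(2*n-1) * (\<Prod>k<n. ev (QQ n k) x y)"
      unfolding y Qfac ..
    also have "\<dots> = ev ?R x y" unfolding ev_def by (simp add: poly_prod)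
    finally have "ev ?P x y = ev ?R x y" .
    then show "ev (?P - ?R) x y = 0" unfolding ev_def by simp
  qed
  then show ?thesis by simp
qed

lemma C_unit: "is_unit ([:[:c:]:] :: complex poly poly) \<longleftrightarrow> c \<noteq> 0"
  by (simp add: is_unit_const_poly_iff dvd_field_iff)

theorem mainTheorem7:
  fixes n :: nat
  assumes "n \<ge> 1"
  shows "(\<exists>fs :: complex poly poly list.
            length fs = n \<and> (\<forall>f\<in>set fs. irreducible f) \<and>
            prod_list fs = polyX (cheb (2*n)) + polyY (cheb (2*n)))
       \<and> (\<forall>fs :: complex poly poly list.
            (\<forall>f\<in>set fs. irreducible f) \<and>
            prod_list fs = polyX (cheb (2*n)) + polyY (cheb (2*n)) \<longrightarrow> length fs = n)"
proof -
  have n: "n \<ge> 1" using assms .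
  define C :: "complex poly poly" where "C = [:[:2^(2*n-1):]:]"
  define fs where "fs = (C * QQ n 0) # map (QQ n) [1..<n]"
  have upt: "[0..<n] = 0 # [1..<n]" using n by (simp add: upt_conv_Cons)
  have len: "length fs = n" unfolding fs_def using n by simp
  have Cu: "is_unit C" unfolding C_def by (simp add: C_unit)
  have irr: "\<forall>f\<in>set fs. irreducible f"
  proof
    fix f assume "f \<in> set fs"
    then consider "f = C * QQ n 0" | k where "k \<in> {1..<n}" "f = QQ n k" unfolding fs_def by auto
    then show "irreducible f"
    proof cases
      case 1 then show ?thesis using irreducible_mult_unit_left[OF Cu] Q_irr[OF n, of 0] n by simp
    next
      case 2 then show ?thesis using Q_irr[OF n, of k] by simp
    qed
  qed
  have prod: "prod_list fs = polyX (cheb (2*n)) + polyY (cheb (2*n))"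
  proof -
    have "prod_list fs = C * prod_list (map (QQ n) [0..<n])" unfolding fs_def upt by simp
    also have "\<dots> = C * (\<Prod>k<n. QQ n k)" by (simp add: prod_list_upt)
    finally show ?thesis using biv_identity[OF n] unfolding C_def by simp
  qed
  have cnt: "size (prime_factorization (polyX (cheb (2*n)) + polyY (cheb (2*n)))) = n"
    using count_irr[OF irr] prod len by simp
  show ?thesis
  proof
    show "\<exists>fs :: complex poly poly list.
            length fs = n \<and> (\<forall>f\<in>set fs. irreducible f) \<and>
            prod_list fs = polyX (cheb (2*n)) + polyY (cheb (2*n))"
      using len irr prod by blast
    show "\<forall>fs :: complex poly poly list.
            (\<forall>f\<in>set fs. irreducible f) \<and>
            prod_list fs = polyX (cheb (2*n)) + polyY (cheb (2*n)) \<longrightarrow> length fs = n"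
    proof (intro allI impI)
      fix gs :: "complex poly poly list"
      assume a: "(\<forall>f\<in>set gs. irreducible f) \<and> prod_list gs = polyX (cheb (2*n)) + polyY (cheb (2*n))"
      then have "size (prime_factorization (prod_list gs)) = length gs" using count_irr by blast
      then show "length gs = n" using a cnt by simp
    qed
  qed
qed

end
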